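(* Let $\pi_E$ be a deterministic expert policy in a finite MDP whose induced chain $P_E$ is irreducible and aperiodic, with stationary state-action distribution $\rho^E$ and mixing time $\tau_{\mathrm{mix}}$. Generate an expert trajectory $s_1,a_1,\dots,s_N,a_N$, let $D$ be the set of state-action pairs it visits, and define $R_{\mathrm{int}}(s,a)=\mathbb{1}\{(s,a)\in D\}$. Then for every $\epsilon>0$, with probability at least $1-2\exp\!\big(-\frac{\epsilon^2N}{4.5\,\tau_{\mathrm{mix}}}\big)$ the dataset is such that $\mathbb{E}_{\rho^E}[R_{\mathrm{int}}]\ge 1-\epsilon-\sqrt{8|S|\tau_{\mathrm{mix}}/N}$, and consequently any policy $\pi_I$ (inducing an irreducible aperiodic chain, with stationary state-action distribution $\rho^I$) that maximizes the expected per-step intrinsic reward, in the sense that $\mathbb{E}_{\rho^I}[R_{\mathrm{int}}]\ge\mathbb{E}_{\rho^E}[R_{\mathrm{int}}]$, satisfies $$\mathbb{E}_{\rho^I}[R_{\mathrm{int}}]\;\ge\;1-\epsilon-\sqrt{\frac{8|S|\tau_{\mathrm{mix}}}{N}}.$$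
   Context: A policy $\pi$ in a finite MDP (states $S$, actions $A$, kernel $T$) induces the chain $P_\pi(s,s')=\sum_a\pi(a\mid s)T(s'\mid s,a)$; if irreducible and aperiodic it has stationary distribution $\rho^\pi_S$ and stationary state-action distribution $\rho^\pi(s,a)=\rho^\pi_S(s)\pi(a\mid s)$; $\mathbb{E}_{\rho^\pi}[R]=\sum_{s,a}\rho^\pi(s,a)R(s,a)$. Here $P_E=P_{\pi_E}$, $\rho^E=\rho^{\pi_E}$, $\rho^E_S=\rho^{\pi_E}_S$, $\rho^I=\rho^{\pi_I}$. The mixing time $\tau_{\mathrm{mix}}$ is the smallest integer $t\ge0$ with $\max_{s'}\|\mathbb{1}(s')^\top P_E^t-\rho^E_S\|_{\mathrm{TV}}\le\tfrac14$, where $\|\rho_1-\rho_2\|_{\mathrm{TV}}=\sup_{M}|\rho_1(M)-\rho_2(M)|$. The trajectory is generated by running $\pi_E$ in the MDP. *)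

theory Defs
  imports Complex_Main
begin

definition mdp_kernel :: "('s::finite \<Rightarrow> 'a::finite \<Rightarrow> 's \<Rightarrow> real) \<Rightarrow> bool" where
  "mdp_kernel T \<longleftrightarrow> (\<forall>s a s'. 0 \<le> T s a s') \<and> (\<forall>s a. (\<Sum>s'\<in>UNIV. T s a s') = 1)"

definition is_policy :: "('s::finite \<Rightarrow> 'a::finite \<Rightarrow> real) \<Rightarrow> bool" where
  "is_policy pol \<longleftrightarrow> (\<forall>s a. 0 \<le> pol s a) \<and> (\<forall>s. (\<Sum>a\<in>UNIV. pol s a) = 1)"

definition det_policy :: "('s \<Rightarrow> 'a) \<Rightarrow> 's \<Rightarrow> 'a \<Rightarrow> real" where
  "det_policy d s a = (if a = d s then 1 else 0)"

definition induced_chain ::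
  "('s::finite \<Rightarrow> 'a::finite \<Rightarrow> 's \<Rightarrow> real) \<Rightarrow> ('s \<Rightarrow> 'a \<Rightarrow> real) \<Rightarrow> 's \<Rightarrow> 's \<Rightarrow> real" where
  "induced_chain T pol s s' = (\<Sum>a\<in>UNIV. pol s a * T s a s')"

fun matpow :: "('s::finite \<Rightarrow> 's \<Rightarrow> real) \<Rightarrow> nat \<Rightarrow> 's \<Rightarrow> 's \<Rightarrow> real" where
  "matpow P 0 s s' = (if s = s' then 1 else 0)"
| "matpow P (Suc n) s s' = (\<Sum>u\<in>UNIV. matpow P n s u * P u s')"

definition irreducible_chain :: "('s::finite \<Rightarrow> 's \<Rightarrow> real) \<Rightarrow> bool" where
  "irreducible_chain P \<longleftrightarrow> (\<forall>s s'. \<exists>n. matpow P n s s' > 0)"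

definition period :: "('s::finite \<Rightarrow> 's \<Rightarrow> real) \<Rightarrow> 's \<Rightarrow> nat" where
  "period P s = Gcd {n. n \<ge> 1 \<and> matpow P n s s > 0}"

definition aperiodic_chain :: "('s::finite \<Rightarrow> 's \<Rightarrow> real) \<Rightarrow> bool" where
  "aperiodic_chain P \<longleftrightarrow> (\<forall>s. period P s = 1)"

definition stationary_dist :: "('s::finite \<Rightarrow> 's \<Rightarrow> real) \<Rightarrow> ('s \<Rightarrow> real) \<Rightarrow> bool" where
  "stationary_dist P \<rho> \<longleftrightarrow> (\<forall>s. 0 \<le> \<rho> s) \<and> (\<Sum>s\<in>UNIV. \<rho> s) = 1 \<and>
     (\<forall>s'. \<rho> s' = (\<Sum>s\<in>UNIV. \<rho> s * P s s'))"

definition sa_dist :: "('s \<Rightarrow> real) \<Rightarrow> ('s \<Rightarrow> 'a \<Rightarrow> real) \<Rightarrow> 's \<times> 'a \<Rightarrow> real" where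
  "sa_dist \<rho>S pol = (\<lambda>(s,a). \<rho>S s * pol s a)"

definition expect_sa :: "('s::finite \<times> 'a::finite \<Rightarrow> real) \<Rightarrow> ('s \<times> 'a \<Rightarrow> real) \<Rightarrow> real" where
  "expect_sa \<rho> R = (\<Sum>sa\<in>UNIV. \<rho> sa * R sa)"

definition tv_dist :: "('s::finite \<Rightarrow> real) \<Rightarrow> ('s \<Rightarrow> real) \<Rightarrow> real" where
  "tv_dist p q = (SUP M\<in>(UNIV :: 's set set). \<bar>(\<Sum>x\<in>M. p x) - (\<Sum>x\<in>M. q x)\<bar>)"

definition mixing_time :: "('s::finite \<Rightarrow> 's \<Rightarrow> real) \<Rightarrow> ('s \<Rightarrow> real) \<Rightarrow> nat" where
  "mixing_time P \<rho> = (LEAST t. \<forall>s'. tv_dist (matpow P t s') \<rho> \<le> 1/4)"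

definition path_prob :: "('s \<Rightarrow> real) \<Rightarrow> ('s \<Rightarrow> 's \<Rightarrow> real) \<Rightarrow> 's list \<Rightarrow> real" where
  "path_prob mu P xs = (case xs of [] \<Rightarrow> 1
      | x # _ \<Rightarrow> mu x * (\<Prod>i<length xs - 1. P (xs ! i) (xs ! Suc i)))"

definition traj_prob :: "('s::finite \<Rightarrow> real) \<Rightarrow> ('s \<Rightarrow> 's \<Rightarrow> real) \<Rightarrow> nat \<Rightarrow> ('s list \<Rightarrow> bool) \<Rightarrow> real" where
  "traj_prob mu P N E = (\<Sum>xs\<in>{xs. length xs = N \<and> E xs}. path_prob mu P xs)"

text \<open>Dataset of visited state-action pairs of the expert trajectory (a_i = pi_E(s_i)),
  and the intrinsic reward R_int(s,a) = 1{(s,a) in D}.\<close>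
definition dataset :: "('s \<Rightarrow> 'a) \<Rightarrow> 's list \<Rightarrow> ('s \<times> 'a) set" where
  "dataset piE xs = {(s, piE s) | s. s \<in> set xs}"

definition R_int :: "('s \<times> 'a) set \<Rightarrow> 's \<times> 'a \<Rightarrow> real" where
  "R_int D sa = (if sa \<in> D then 1 else 0)"

end

theory Submission imports Defs begin

definition stoch :: "('s::finite \<Rightarrow> 's \<Rightarrow> real) \<Rightarrow> bool" where
  "stoch P \<longleftrightarrow> (\<forall>s s'. 0 \<le> P s s') \<and> (\<forall>s. (\<Sum>s'\<in>UNIV. P s s') = 1)"

lemma stochD: "stoch P \<Longrightarrow> 0 \<le> P s s'" "stoch P \<Longrightarrow> (\<Sum>s'\<in>UNIV. P s s') = 1"
  by (auto simp: stoch_def)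

lemma matpow_nonneg: "stoch P \<Longrightarrow> 0 \<le> matpow P n s s'"
  by (induction n arbitrary: s') (auto intro!: sum_nonneg mult_nonneg_nonneg simp: stochD)

lemma matpow_rowsum: "stoch P \<Longrightarrow> (\<Sum>s'\<in>UNIV. matpow P n s s') = 1"
proof (induction n)
  case 0 then show ?case by simp
next
  case (Suc n)
  have "(\<Sum>s'\<in>UNIV. matpow P (Suc n) s s') = (\<Sum>u\<in>UNIV. matpow P n s u * (\<Sum>s'\<in>UNIV. P u s'))"
    by (simp only: matpow.simps sum_distrib_left, rule sum.swap)
  also have "\<dots> = 1" using Suc by (simp add: stochD)
  finally show ?case .
qed

lemma matpow_add: "matpow P (m+n) s s' = (\<Sum>u\<in>UNIV. matpow P m s u * matpow P n u s')"
proof (induction n arbitrary: s')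
  case 0 then show ?case by (simp add: if_distrib cong: if_cong)
next
  case (Suc n)
  have "matpow P (m + Suc n) s s' = (\<Sum>v\<in>UNIV. (\<Sum>u\<in>UNIV. matpow P m s u * matpow P n u v) * P v s')"
    using Suc by simp
  also have "\<dots> = (\<Sum>u\<in>UNIV. matpow P m s u * (\<Sum>v\<in>UNIV. matpow P n u v * P v s'))"
    by (simp only: sum_distrib_left sum_distrib_right mult.assoc, rule sum.swap)
  finally show ?case by simp
qed

lemma matpow_one: "matpow P 1 s s' = P s s'"
proof -
  have "(\<Sum>u\<in>UNIV. (if s = u then 1 else 0) * P u s') = (\<Sum>u\<in>UNIV. if s = u then P u s' else 0)"
    by (rule sum.cong) auto
  then show ?thesis by simp
qed

lemma matpow_Suc_left: "matpow P (Suc n) s s' = (\<Sum>u\<in>UNIV. P s u * matpow P n u s')"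
proof -
  have "matpow P (Suc n) s s' = matpow P (1+n) s s'" by simp
  also have "\<dots> = (\<Sum>u\<in>UNIV. matpow P 1 s u * matpow P n u s')" by (rule matpow_add)
  finally show ?thesis by (simp only: matpow_one)
qed

lemma matpow_ge: "stoch P \<Longrightarrow> matpow P m s u * matpow P n u s' \<le> matpow P (m+n) s s'"
  unfolding matpow_add
  by (rule member_le_sum[where f="\<lambda>u. matpow P m s u * matpow P n u s'"])
     (auto intro: mult_nonneg_nonneg matpow_nonneg)

lemma stationary_pow:
  assumes "stationary_dist P \<rho>"
  shows "(\<Sum>y\<in>UNIV. \<rho> y * matpow P n y z) = \<rho> z"
proof (induction n arbitrary: z)
  case 0
  have "(\<Sum>y\<in>UNIV. \<rho> y * matpow P 0 y z) = (\<Sum>y\<in>UNIV. if y = z then \<rho> y else 0)"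
    by (rule sum.cong) auto
  then show ?case by simp
next
  case (Suc n)
  have "(\<Sum>y\<in>UNIV. \<rho> y * matpow P (Suc n) y z) = (\<Sum>u\<in>UNIV. (\<Sum>y\<in>UNIV. \<rho> y * matpow P n y u) * P u z)"
    by (simp only: matpow.simps sum_distrib_left sum_distrib_right mult.assoc, rule sum.swap)
  also have "\<dots> = (\<Sum>u\<in>UNIV. \<rho> u * P u z)" using Suc by simp
  also have "\<dots> = \<rho> z" using assms unfolding stationary_dist_def by metis
  finally show ?case .
qed

lemma osc_contract:
  fixes Q :: "'s::finite \<Rightarrow> 's \<Rightarrow> real"
  assumes rows: "(\<Sum>w\<in>UNIV. Q x w) = 1" "(\<Sum>w\<in>UNIV. Q x' w) = 1"
    and cB: "\<And>B. (\<Sum>w\<in>B. Q x w) - (\<Sum>w\<in>B. Q x' w) \<le> c"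
    and hD: "\<And>w w'. h w - h w' \<le> D"
  shows "(\<Sum>w\<in>UNIV. Q x w * h w) - (\<Sum>w\<in>UNIV. Q x' w * h w) \<le> c * D"
proof -
  define lo where "lo = Min (range h)"
  have "lo \<in> range h" unfolding lo_def by (rule Min_in) auto
  then obtain w0 where w0: "h w0 = lo" by auto
  have lo_le: "lo \<le> h w" for w unfolding lo_def by (rule Min_le) auto
  have D0: "0 \<le> D" using hD[of w0 w0] by simp
  define g where "g w = Q x w - Q x' w" for w
  have sg: "(\<Sum>w\<in>UNIV. g w) = 0" using rows by (simp add: g_def sum_subtractf)
  have "(\<Sum>w\<in>UNIV. Q x w * h w) - (\<Sum>w\<in>UNIV. Q x' w * h w) = (\<Sum>w\<in>UNIV. g w * h w)"
    by (simp add: g_def sum_subtractf left_diff_distrib)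
  also have "\<dots> = (\<Sum>w\<in>UNIV. g w * (h w - lo))"
    using sg by (simp add: right_diff_distrib sum_subtractf sum_distrib_right[symmetric])
  also have "\<dots> \<le> (\<Sum>w\<in>UNIV. if g w > 0 then g w * D else 0)"
  proof (rule sum_mono)
    fix w
    show "g w * (h w - lo) \<le> (if g w > 0 then g w * D else 0)"
    proof (cases "g w > 0")
      case True
      have "h w - lo \<le> D" using hD[of w w0] w0 by simp
      then show ?thesis using True by (simp add: mult_left_mono)
    next
      case False
      then show ?thesis using lo_le[of w] by (simp add: mult_nonpos_nonneg)
    qed
  qed
  also have "\<dots> = D * (\<Sum>w\<in>{w. g w > 0}. g w)"
    by (simp add: sum.If_cases sum_distrib_left mult.commute Int_def)
  also have "(\<Sum>w\<in>{w. g w > 0}. g w) = (\<Sum>w\<in>{w. g w > 0}. Q x w) - (\<Sum>w\<in>{w. g w > 0}. Q x' w)"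
    by (simp add: g_def sum_subtractf)
  also have "D * \<dots> \<le> D * c" using cB D0 by (simp add: mult_left_mono)
  finally show ?thesis by (simp add: mult.commute)
qed



definition fA :: "('s::finite \<Rightarrow> 's \<Rightarrow> real) \<Rightarrow> nat \<Rightarrow> 's set \<Rightarrow> 's \<Rightarrow> real" where
  "fA P t A y = (\<Sum>z\<in>A. matpow P t y z)"

lemma fA_step: "fA P (L + t) A y = (\<Sum>w\<in>UNIV. matpow P L y w * fA P t A w)"
  unfolding fA_def matpow_add sum_distrib_left by (rule sum.swap)

lemma fA_0: "fA P 0 A y = (if y \<in> A then 1 else 0)"
proof -
  have "fA P 0 A y = (\<Sum>z\<in>A. if y = z then 1 else 0)" by (simp add: fA_def)
  also have "\<dots> = (if y \<in> A then 1 else 0)" by (simp add: sum.delta)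
  finally show ?thesis .
qed

lemma osc_iter:
  assumes st: "stoch P" and c0: "0 \<le> c"
    and cB: "\<And>x x' B. (\<Sum>w\<in>B. matpow P L x w) - (\<Sum>w\<in>B. matpow P L x' w) \<le> c"
  shows "fA P (k*L) A y - fA P (k*L) A y' \<le> c^k"
proof (induction k arbitrary: y y')
  case 0 then show ?case by (simp add: fA_0)
next
  case (Suc k)
  have "fA P (Suc k * L) A y - fA P (Suc k * L) A y'
      = (\<Sum>w\<in>UNIV. matpow P L y w * fA P (k*L) A w) - (\<Sum>w\<in>UNIV. matpow P L y' w * fA P (k*L) A w)"
    by (simp add: fA_step[symmetric] add.commute)
  also have "\<dots> \<le> c * c^k"
    by (rule osc_contract[where Q="matpow P L"]) (use Suc st cB matpow_rowsum in auto)
  finally show ?case by simp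
qed

lemma near_stationary:
  assumes st: "stoch P" and sd: "stationary_dist P \<rho>"
    and osc: "\<And>y y'. fA P t A y - fA P t A y' \<le> e"
  shows "\<bar>fA P t A x - (\<Sum>z\<in>A. \<rho> z)\<bar> \<le> e"
proof -
  have rA: "(\<Sum>z\<in>A. \<rho> z) = (\<Sum>y\<in>UNIV. \<rho> y * fA P t A y)"
  proof -
    have "(\<Sum>z\<in>A. \<rho> z) = (\<Sum>z\<in>A. \<Sum>y\<in>UNIV. \<rho> y * matpow P t y z)"
      using stationary_pow[OF sd, of t] by simp
    also have "\<dots> = (\<Sum>y\<in>UNIV. \<Sum>z\<in>A. \<rho> y * matpow P t y z)" by (rule sum.swap)
    finally show ?thesis by (simp add: fA_def sum_distrib_left)
  qed
  have r1: "(\<Sum>y\<in>UNIV. \<rho> y) = 1" and r0: "\<And>y. 0 \<le> \<rho> y" using sd unfolding stationary_dist_def by blast+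
  have "(\<Sum>z\<in>A. \<rho> z) - fA P t A x = (\<Sum>y\<in>UNIV. \<rho> y * (fA P t A y - fA P t A x))"
    using rA r1 by (simp add: right_diff_distrib sum_subtractf sum_distrib_right[symmetric])
  also have "\<dots> \<le> (\<Sum>y\<in>UNIV. \<rho> y * e)"
    by (rule sum_mono) (use osc r0 in \<open>auto intro: mult_left_mono\<close>)
  finally have 1: "(\<Sum>z\<in>A. \<rho> z) - fA P t A x \<le> e" using r1 by (simp add: sum_distrib_right[symmetric])
  have "fA P t A x - (\<Sum>z\<in>A. \<rho> z) = (\<Sum>y\<in>UNIV. \<rho> y * (fA P t A x - fA P t A y))"
    using rA r1 by (simp add: right_diff_distrib sum_subtractf sum_distrib_right[symmetric])
  also have "\<dots> \<le> (\<Sum>y\<in>UNIV. \<rho> y * e)"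
    by (rule sum_mono) (use osc r0 in \<open>auto intro: mult_left_mono\<close>)
  finally have 2: "fA P t A x - (\<Sum>z\<in>A. \<rho> z) \<le> e" using r1 by (simp add: sum_distrib_right[symmetric])
  show ?thesis using 1 2 by linarith
qed



lemma semigroup_large:
  fixes S :: "nat set"
  assumes cl: "\<And>a b. a \<in> S \<Longrightarrow> b \<in> S \<Longrightarrow> a + b \<in> S" and g: "Gcd S = 1"
  shows "\<exists>M. \<forall>n\<ge>M. n \<in> S"
proof -
  define S0 where "S0 = insert 0 S"
  have cl0: "a + b \<in> S0" if "a \<in> S0" "b \<in> S0" for a b
    using that cl by (auto simp: S0_def)
  have mult0: "k * x \<in> S0" if "x \<in> S0" for k x
  proof (induction k)
    case 0 then show ?case by (simp add: S0_def)
  next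
    case (Suc k) then show ?case using cl0[OF that Suc] by simp
  qed
  have "\<not> S \<subseteq> {0}" using g Gcd_0_iff[of S] by auto
  then obtain a where aS: "a \<in> S" "a > 0" by auto
  define I where "I = {int p - int q | p q. p \<in> S0 \<and> q \<in> S0}"
  have I_add: "x + y \<in> I" if "x \<in> I" "y \<in> I" for x y
  proof -
    from that obtain p q p' q' where "x = int p - int q" "y = int p' - int q'"
      "p \<in> S0" "q \<in> S0" "p' \<in> S0" "q' \<in> S0" by (auto simp: I_def)
    then show ?thesis unfolding I_def
      by (intro CollectI exI[of _ "p+p'"] exI[of _ "q+q'"]) (auto intro: cl0)
  qed
  have I_neg: "- x \<in> I" if "x \<in> I" for x
    using that unfolding I_def by force
  have I0: "0 \<in> I" unfolding I_def S0_def by force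
  have I_multn: "int k * x \<in> I" if "x \<in> I" for k x
    by (induction k) (auto simp: I0 distrib_right intro: I_add that)
  have I_mult: "k * x \<in> I" if "x \<in> I" for k x
  proof (cases "k \<ge> 0")
    case True then show ?thesis using I_multn[OF that, of "nat k"] by simp
  next
    case False
    then have "- (int (nat (-k)) * x) \<in> I" using I_multn[OF that, of "nat (-k)"] I_neg by blast
    then show ?thesis using False by simp
  qed
  have aI: "int a \<in> I" unfolding I_def S0_def using aS by force
  define d where "d = (LEAST d. d > 0 \<and> int d \<in> I)"
  have dI: "d > 0 \<and> int d \<in> I" unfolding d_def by (rule LeastI[of _ a]) (use aS aI in auto)
  have dmin: "d \<le> e" if "e > 0" "int e \<in> I" for e
    unfolding d_def by (rule Least_le) (use that in auto)
  have ddvd: "int d dvd x" if "x \<in> I" for x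
  proof -
    have "x mod int d = x + (- (x div int d)) * int d" by (simp add: minus_div_mult_eq_mod[symmetric])
    then have mI: "x mod int d \<in> I" using I_add[OF that I_mult[OF dI[THEN conjunct2], of "- (x div int d)"]] by simp
    have m0: "0 \<le> x mod int d" "x mod int d < int d" using dI by auto
    show ?thesis
    proof (rule ccontr)
      assume "\<not> int d dvd x"
      then have "x mod int d > 0" using m0 by (auto simp: dvd_eq_mod_eq_0)
      then have "d \<le> nat (x mod int d)" using dmin[of "nat (x mod int d)"] mI by auto
      then show False using m0 by linarith
    qed
  qed
  have "d dvd s" if "s \<in> S" for s
  proof -
    have "int s \<in> I" unfolding I_def S0_def using that by force
    then have "int d dvd int s" using ddvd by blast
    then show ?thesis by simp
  qed
  then have "d dvd Gcd S" by (simp add: Gcd_greatest)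
  then have d1: "d = 1" using g by simp
  then obtain p q where pq: "1 = int p - int q" "p \<in> S0" "q \<in> S0" using dI unfolding I_def by auto
  then have p: "p = q + 1" by linarith
  show ?thesis
  proof (cases "q = 0")
    case True
    then have "1 \<in> S0" using pq p by simp
    then have "n \<in> S" if "n \<ge> 1" for n using mult0[of 1 n] that by (auto simp: S0_def)
    then show ?thesis by blast
  next
    case False
    have "n \<in> S" if n: "n \<ge> q * q" for n
    proof -
      define k r where "k = n div q" and "r = n mod q"
      have r: "r < q" using False by (simp add: r_def)
      have kq: "q \<le> k" unfolding k_def using n False
        by (metis div_le_mono nonzero_mult_div_cancel_right)
      have "n = (k - r) * q + r * (q + 1)" using r kq
        by (simp add: k_def r_def algebra_simps diff_mult_distrib)
      moreover have "(k - r) * q + r * (q + 1) \<in> S0"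
        using cl0 mult0 pq p by metis
      moreover have "n \<noteq> 0" using n False by (metis mult_is_0 le_0_eq)
      ultimately show ?thesis by (auto simp: S0_def)
    qed
    then show ?thesis by blast
  qed
qed



fun pp :: "('s \<Rightarrow> 's \<Rightarrow> real) \<Rightarrow> 's list \<Rightarrow> real" where
  "pp P [] = 1" | "pp P [x] = 1" | "pp P (x#y#ys) = P x y * pp P (y#ys)"

lemma pp_prod: "(\<Prod>i<length xs. P ((x#xs)!i) ((x#xs)! Suc i)) = pp P (x#xs)"
proof (induction xs arbitrary: x)
  case Nil then show ?case by simp
next
  case (Cons y ys)
  have "(\<Prod>i<length (y#ys). P ((x#y#ys)!i) ((x#y#ys)! Suc i))
      = P x y * (\<Prod>i<length ys. P ((y#ys)!i) ((y#ys)! Suc i))"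
    by (simp only: length_Cons prod.lessThan_Suc_shift) simp
  then show ?case using Cons by simp
qed

lemma path_prob_cons: "path_prob mu P (x#xs) = mu x * pp P (x#xs)"
  by (simp only: path_prob_def list.case length_Cons diff_Suc_1 pp_prod)

lemma pp_nonneg: "stoch P \<Longrightarrow> 0 \<le> pp P xs"
  by (induction P xs rule: pp.induct) (auto simp: stochD)

lemma path_prob_nonneg: "stoch P \<Longrightarrow> (\<forall>s. 0 \<le> mu s) \<Longrightarrow> 0 \<le> path_prob mu P xs"
  by (cases xs) (simp add: path_prob_def, simp add: path_prob_cons pp_nonneg)

fun av :: "('s::finite \<Rightarrow> 's \<Rightarrow> real) \<Rightarrow> 's set \<Rightarrow> nat \<Rightarrow> 's \<Rightarrow> real" where
  "av P A 0 y = (if y \<in> A then 0 else 1)"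
| "av P A (Suc n) y = (if y \<in> A then 0 else (\<Sum>z\<in>UNIV. P y z * av P A n z))"

lemma finite_lists_len: "finite {xs :: 's::finite list. length xs = n}"
  using finite_lists_length_eq[of "UNIV :: 's set" n] by simp

lemma sum_lists_Suc:
  "(\<Sum>xs\<in>{xs :: 's::finite list. length xs = Suc n}. g xs) = (\<Sum>z\<in>UNIV. \<Sum>zs\<in>{xs. length xs = n}. g (z#zs))"
proof -
  have eq: "{xs :: 's list. length xs = Suc n} = (\<lambda>(z,zs). z#zs) ` (UNIV \<times> {xs. length xs = n})"
    by (auto simp: length_Suc_conv image_def)
  have inj: "inj_on (\<lambda>(z::'s,zs). z#zs) (UNIV \<times> {xs. length xs = n})" by (auto simp: inj_on_def)
  have "(\<Sum>z\<in>UNIV. \<Sum>zs\<in>{xs. length xs = n}. g (z#zs)) = (\<Sum>(z,zs)\<in>UNIV\<times>{xs. length xs = n}. g (z#zs))"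
    by (rule sum.cartesian_product)
  then show ?thesis unfolding eq sum.reindex[OF inj] by (simp add: case_prod_beta')
qed

lemma av_paths:
  "(\<Sum>ys\<in>{ys. length ys = n}. if set (y#ys) \<inter> A = {} then pp P (y#ys) else 0) = av P A n y"
proof (induction n arbitrary: y)
  case 0
  have "{ys :: 'a list. length ys = 0} = {[]}" by auto
  then show ?case by simp
next
  case (Suc n)
  show ?case
  proof (cases "y \<in> A")
    case True then show ?thesis by (auto intro: sum.neutral)
  next
    case False
    have "(\<Sum>ys\<in>{ys. length ys = Suc n}. if set (y#ys) \<inter> A = {} then pp P (y#ys) else 0)
       = (\<Sum>z\<in>UNIV. \<Sum>zs\<in>{xs. length xs = n}. if set (y#z#zs) \<inter> A = {} then pp P (y#z#zs) else 0)"
      by (rule sum_lists_Suc)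
    also have "\<dots> = (\<Sum>z\<in>UNIV. P y z * (\<Sum>zs\<in>{xs. length xs = n}. if set (z#zs) \<inter> A = {} then pp P (z#zs) else 0))"
      using False by (auto simp: sum_distrib_left intro!: sum.cong)
    also have "\<dots> = av P A (Suc n) y" using Suc False by simp
    finally show ?thesis .
  qed
qed

lemma traj_prob_if:
  "traj_prob mu P N E = (\<Sum>xs\<in>{xs. length xs = N}. if E xs then path_prob mu P xs else 0)"
proof -
  have "{xs. length xs = N \<and> E xs} = {xs \<in> {xs. length xs = N}. E xs}" by auto
  then show ?thesis unfolding traj_prob_def using sum.inter_filter[OF finite_lists_len] by simp
qed

lemma traj_avoid:
  assumes "N \<ge> 1"
  shows "traj_prob mu P N (\<lambda>xs. set xs \<inter> A = {}) = (\<Sum>y\<in>UNIV. mu y * av P A (N-1) y)"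
proof -
  obtain n where N: "N = Suc n" using assms by (cases N) auto
  have "traj_prob mu P N (\<lambda>xs. set xs \<inter> A = {})
     = (\<Sum>y\<in>UNIV. \<Sum>ys\<in>{xs. length xs = n}. if set (y#ys) \<inter> A = {} then mu y * pp P (y#ys) else 0)"
    unfolding traj_prob_if N sum_lists_Suc path_prob_cons by (rule refl)
  also have "\<dots> = (\<Sum>y\<in>UNIV. mu y * (\<Sum>ys\<in>{xs. length xs = n}. if set (y#ys) \<inter> A = {} then pp P (y#ys) else 0))"
    by (auto simp: sum_distrib_left intro!: sum.cong)
  also have "\<dots> = (\<Sum>y\<in>UNIV. mu y * av P A (N-1) y)" unfolding av_paths N by simp
  finally show ?thesis .
qed

lemma av_empty: "stoch P \<Longrightarrow> av P {} n y = 1"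
  by (induction n arbitrary: y) (auto simp: stochD)

lemma traj_total:
  assumes "N \<ge> 1" "stoch P" "(\<Sum>s\<in>UNIV. mu s) = 1"
  shows "traj_prob mu P N (\<lambda>xs. True) = 1"
proof -
  have "traj_prob mu P N (\<lambda>xs. True) = traj_prob mu P N (\<lambda>xs. set xs \<inter> {} = {})"
    by (simp add: traj_prob_def)
  also have "\<dots> = (\<Sum>y\<in>UNIV. mu y * av P {} (N-1) y)" by (rule traj_avoid[OF assms(1)])
  also have "\<dots> = 1" using av_empty[OF assms(2)] assms(3) by simp
  finally show ?thesis .
qed

lemma traj_compl:
  "traj_prob mu P N E = traj_prob mu P N (\<lambda>xs. True) - traj_prob mu P N (\<lambda>xs. \<not> E xs)"
  unfolding traj_prob_if sum_subtractf[symmetric] by (rule sum.cong) auto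

lemma traj_union:
  fixes F :: "'s::finite list \<Rightarrow> bool"
  assumes st: "stoch P" and mu: "\<forall>s. 0 \<le> mu s" and fin: "finite \<A>"
    and cov: "\<And>xs. length xs = N \<Longrightarrow> F xs \<Longrightarrow> \<exists>A\<in>\<A>. set xs \<inter> A = {}"
  shows "traj_prob mu P N F \<le> (\<Sum>A\<in>\<A>. traj_prob mu P N (\<lambda>xs. set xs \<inter> A = {}))"
proof -
  have "traj_prob mu P N F \<le> (\<Sum>xs\<in>{xs. length xs = N}. \<Sum>A\<in>\<A>. if set xs \<inter> A = {} then path_prob mu P xs else 0)"
    unfolding traj_prob_if
  proof (rule sum_mono)
    fix xs :: "'s list" assume xs: "xs \<in> {xs. length xs = N}"
    show "(if F xs then path_prob mu P xs else 0) \<le> (\<Sum>A\<in>\<A>. if set xs \<inter> A = {} then path_prob mu P xs else 0)"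
    proof (cases "F xs")
      case True
      then obtain A where A: "A \<in> \<A>" "set xs \<inter> A = {}" using cov xs by blast
      have "(if set xs \<inter> A = {} then path_prob mu P xs else 0) \<le> (\<Sum>A\<in>\<A>. if set xs \<inter> A = {} then path_prob mu P xs else 0)"
        by (rule member_le_sum) (use A fin path_prob_nonneg[OF st mu] in auto)
      then show ?thesis using True A by simp
    next
      case False then show ?thesis by (simp add: sum_nonneg path_prob_nonneg[OF st mu])
    qed
  qed
  also have "\<dots> = (\<Sum>A\<in>\<A>. traj_prob mu P N (\<lambda>xs. set xs \<inter> A = {}))"
    unfolding traj_prob_if by (rule sum.swap)
  finally show ?thesis .
qed



lemma primitive:
  assumes st: "stoch P" and irr: "irreducible_chain P" and ap: "aperiodic_chain P"
  shows "\<exists>M. \<forall>s s'. matpow P M s s' > 0"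
proof -
  have "\<exists>M. \<forall>n\<ge>M. n \<in> {n. n \<ge> 1 \<and> matpow P n s s > 0}" for s
  proof (rule semigroup_large)
    fix a b assume a: "a \<in> {n. n \<ge> 1 \<and> matpow P n s s > 0}" and b: "b \<in> {n. n \<ge> 1 \<and> matpow P n s s > 0}"
    have "0 < matpow P a s s * matpow P b s s" using a b by simp
    also have "\<dots> \<le> matpow P (a+b) s s" by (rule matpow_ge[OF st])
    finally show "a + b \<in> {n. n \<ge> 1 \<and> matpow P n s s > 0}" using a by simp
  next
    show "Gcd {n. n \<ge> 1 \<and> matpow P n s s > 0} = 1"
      using ap unfolding aperiodic_chain_def period_def by blast
  qed
  then have "\<forall>s. \<exists>M. \<forall>n\<ge>M. n \<in> {n. n \<ge> 1 \<and> matpow P n s s > 0}" by blast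
  from choice[OF this] obtain Ms where Ms: "\<forall>s. \<forall>n\<ge>Ms s. n \<in> {n. n \<ge> 1 \<and> matpow P n s s > 0}" by blast
  have "\<forall>p. \<exists>n. matpow P n (fst p) (snd p) > 0" using irr unfolding irreducible_chain_def by blast
  from choice[OF this] obtain kp where kp: "\<forall>p. matpow P (kp p) (fst p) (snd p) > 0" by blast
  define M0 where "M0 = (\<Sum>s\<in>UNIV. Ms s)"
  define K0 where "K0 = (\<Sum>p\<in>UNIV. kp p)"
  have "matpow P (M0 + K0) s s' > 0" for s s'
  proof -
    define k where "k = kp (s,s')"
    have m: "Ms s \<le> M0" unfolding M0_def by (rule member_le_sum) auto
    have kk: "k \<le> K0" unfolding K0_def k_def by (rule member_le_sum) auto
    have e: "M0 + K0 = (M0 + K0 - k) + k" using kk by simp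
    have p1: "0 < matpow P (M0 + K0 - k) s s" using Ms m kk by auto
    have p2: "0 < matpow P k s s'" using kp k_def by (metis fst_conv snd_conv)
    have "0 < matpow P (M0 + K0 - k) s s * matpow P k s s'" using p1 p2 by simp
    also have "\<dots> \<le> matpow P ((M0 + K0 - k) + k) s s'" by (rule matpow_ge[OF st])
    finally show ?thesis using e by simp
  qed
  then show ?thesis by blast
qed

lemma tv_bound:
  assumes "tv_dist p q \<le> e"
  shows "\<bar>(\<Sum>x\<in>B. p x) - (\<Sum>x\<in>B. q x)\<bar> \<le> e"
proof -
  have "\<bar>(\<Sum>x\<in>B. p x) - (\<Sum>x\<in>B. q x)\<bar> \<le> tv_dist p q"
    unfolding tv_dist_def by (rule cSUP_upper) (auto intro: bdd_above_finite)
  then show ?thesis using assms by linarith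
qed

lemma mixing_exists:
  assumes st: "stoch P" and irr: "irreducible_chain P" and ap: "aperiodic_chain P"
    and sd: "stationary_dist P \<rho>"
  shows "\<forall>s'. tv_dist (matpow P (mixing_time P \<rho>) s') \<rho> \<le> 1/4"
proof -
  obtain M where M: "\<And>s s'. matpow P M s s' > 0" using primitive[OF assms(1-3)] by blast
  define \<alpha> where "\<alpha> = Min (range (\<lambda>p. matpow P M (fst p) (snd p)))"
  have "\<alpha> \<in> range (\<lambda>p. matpow P M (fst p) (snd p))" unfolding \<alpha>_def by (rule Min_in) auto
  then have a0: "\<alpha> > 0" using M by auto
  have ale: "\<alpha> \<le> matpow P M s s'" for s s'
    unfolding \<alpha>_def by (rule Min_le) (auto intro: image_eqI[of _ _ "(s,s')"])
  have le1: "matpow P M s s' \<le> 1" for s s'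
    using member_le_sum[of s' UNIV "matpow P M s"] matpow_rowsum[OF st, of M s] matpow_nonneg[OF st] by auto
  have cB: "(\<Sum>w\<in>B. matpow P M x w) - (\<Sum>w\<in>B. matpow P M x' w) \<le> 1 - \<alpha>" for x x' B
  proof (cases "B = UNIV")
    case True then show ?thesis using matpow_rowsum[OF st] ale[of x x] le1[of x x] by simp
  next
    case False
    then obtain w where w: "w \<notin> B" by auto
    have "(\<Sum>w\<in>B. matpow P M x w) + matpow P M x w \<le> (\<Sum>w\<in>UNIV. matpow P M x w)"
    proof -
      have "(\<Sum>w\<in>insert w B. matpow P M x w) \<le> (\<Sum>w\<in>UNIV. matpow P M x w)"
        by (rule sum_mono2) (auto intro: matpow_nonneg[OF st])
      then show ?thesis using w by (simp add: add.commute)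
    qed
    moreover have "0 \<le> (\<Sum>w\<in>B. matpow P M x' w)" by (rule sum_nonneg) (auto intro: matpow_nonneg[OF st])
    ultimately show ?thesis using matpow_rowsum[OF st, of M x] ale[of x w] by linarith
  qed
  have c0: "0 \<le> 1 - \<alpha>" using ale le1 by (meson diff_ge_0_iff_ge order.trans)
  obtain k where k: "(1 - \<alpha>)^k < 1/4" using real_arch_pow_inv[of "1/4" "1 - \<alpha>"] a0 by auto
  have "tv_dist (matpow P (k*M) s') \<rho> \<le> 1/4" for s'
    unfolding tv_dist_def
  proof (rule cSUP_least)
    fix A :: "'a set"
    have "\<bar>fA P (k*M) A s' - (\<Sum>z\<in>A. \<rho> z)\<bar> \<le> (1-\<alpha>)^k"
      by (rule near_stationary[OF st sd]) (rule osc_iter[OF st c0 cB])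
    then show "\<bar>(\<Sum>x\<in>A. matpow P (k*M) s' x) - (\<Sum>x\<in>A. \<rho> x)\<bar> \<le> 1/4"
      using k by (simp add: fA_def)
  qed auto
  then have "\<exists>t. \<forall>s'. tv_dist (matpow P t s') \<rho> \<le> 1/4" by blast
  then show ?thesis unfolding mixing_time_def by (rule LeastI_ex)
qed



lemma av_nonneg: "stoch P \<Longrightarrow> 0 \<le> av P A n y"
  by (induction n arbitrary: y) (auto intro!: sum_nonneg mult_nonneg_nonneg simp: stochD)

lemma av_le1: "stoch P \<Longrightarrow> av P A n y \<le> 1"
proof (induction n arbitrary: y)
  case 0 then show ?case by simp
next
  case (Suc n)
  have "(\<Sum>z\<in>UNIV. P y z * av P A n z) \<le> (\<Sum>z\<in>UNIV. P y z * 1)"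
    by (rule sum_mono) (use Suc in \<open>auto intro!: mult_left_le simp: stochD\<close>)
  then show ?case using stochD(2)[OF Suc.prems, of y] by simp
qed

lemma av_inA: "y \<in> A \<Longrightarrow> av P A n y = 0"
  by (cases n) auto

lemma av_shift: "stoch P \<Longrightarrow> av P A (L + n) y \<le> (\<Sum>z\<in>UNIV. matpow P L y z * av P A n z)"
proof (induction L arbitrary: y)
  case 0
  have "(\<Sum>z\<in>UNIV. matpow P 0 y z * av P A n z) = (\<Sum>z\<in>UNIV. if y = z then av P A n z else 0)"
    by (rule sum.cong) auto
  then show ?case by simp
next
  case (Suc L)
  have "av P A (Suc L + n) y \<le> (\<Sum>z\<in>UNIV. P y z * av P A (L + n) z)"
    using av_nonneg[OF Suc.prems] by (auto intro!: sum_nonneg mult_nonneg_nonneg simp: stochD[OF Suc.prems])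
  also have "\<dots> \<le> (\<Sum>z\<in>UNIV. P y z * (\<Sum>w\<in>UNIV. matpow P L z w * av P A n w))"
    by (rule sum_mono) (use Suc in \<open>auto intro: mult_left_mono simp: stochD\<close>)
  also have "\<dots> = (\<Sum>w\<in>UNIV. matpow P (Suc L) y w * av P A n w)"
    by (simp only: matpow_Suc_left sum_distrib_left sum_distrib_right mult.assoc, rule sum.swap)
  finally show ?case .
qed

lemma av_block:
  assumes st: "stoch P" and c0: "0 \<le> c" and hit: "\<And>y. c \<le> (\<Sum>z\<in>A. matpow P L y z)"
  shows "av P A (k*L + r) y \<le> (1-c)^k"
proof (induction k arbitrary: y)
  case 0 then show ?case using av_le1[OF st] by simp
next
  case (Suc k)
  have sA1: "(\<Sum>z\<in>A. matpow P L y z) \<le> 1"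
    using sum_mono2[of UNIV A "matpow P L y"] matpow_rowsum[OF st, of L y] matpow_nonneg[OF st] by auto
  have c1: "c \<le> 1" using hit[of y] sA1 by linarith
  define a where "a = (1-c)^k"
  have a0: "0 \<le> a" using c1 by (simp add: a_def)
  have "av P A (Suc k * L + r) y = av P A (L + (k*L + r)) y" by (simp add: add.assoc)
  also have "\<dots> \<le> (\<Sum>z\<in>UNIV. matpow P L y z * av P A (k*L + r) z)" by (rule av_shift[OF st])
  also have "\<dots> \<le> (\<Sum>z\<in>UNIV. matpow P L y z * (a - (if z \<in> A then a else 0)))"
  proof (rule sum_mono)
    fix z
    show "matpow P L y z * av P A (k*L + r) z \<le> matpow P L y z * (a - (if z \<in> A then a else 0))"
    proof (cases "z \<in> A")
      case True then show ?thesis using av_inA[of z A P] by simp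
    next
      case False then show ?thesis using Suc.IH[of z] matpow_nonneg[OF st, of L y z]
        by (simp add: a_def mult_left_mono)
    qed
  qed
  also have "\<dots> = a * (\<Sum>z\<in>UNIV. matpow P L y z) - a * (\<Sum>z\<in>UNIV. if z \<in> A then matpow P L y z else 0)"
  proof -
    have "\<And>z. matpow P L y z * (a - (if z \<in> A then a else 0)) = a * matpow P L y z - a * (if z \<in> A then matpow P L y z else 0)"
      by (simp add: algebra_simps)
    then show ?thesis by (simp add: sum_subtractf sum_distrib_left)
  qed
  also have "(\<Sum>z\<in>UNIV. if z \<in> A then matpow P L y z else 0) = (\<Sum>z\<in>A. matpow P L y z)"
    using sum.inter_restrict[of UNIV "matpow P L y" A] by simp
  also have "a * (\<Sum>z\<in>UNIV. matpow P L y z) - a * (\<Sum>z\<in>A. matpow P L y z) \<le> a - a * c"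
    using matpow_rowsum[OF st, of L y] mult_left_mono[OF hit[of y] a0] by simp
  also have "\<dots> = (1-c)^Suc k" by (simp add: a_def algebra_simps)
  finally show ?case .
qed

lemma hitting:
  assumes st: "stoch P" and sd: "stationary_dist P \<rho>"
    and tv: "\<forall>s'. tv_dist (matpow P \<tau> s') \<rho> \<le> 1/4"
  shows "(\<Sum>z\<in>A. \<rho> z) - (1/2)^l \<le> (\<Sum>z\<in>A. matpow P (l*\<tau>) y z)"
proof -
  have cB: "(\<Sum>w\<in>B. matpow P \<tau> x w) - (\<Sum>w\<in>B. matpow P \<tau> x' w) \<le> 1/2" for x x' B
  proof -
    have 1: "\<bar>(\<Sum>w\<in>B. matpow P \<tau> x w) - (\<Sum>w\<in>B. \<rho> w)\<bar> \<le> 1/4"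
      by (rule tv_bound) (use tv in blast)
    have 2: "\<bar>(\<Sum>w\<in>B. matpow P \<tau> x' w) - (\<Sum>w\<in>B. \<rho> w)\<bar> \<le> 1/4"
      by (rule tv_bound) (use tv in blast)
    show ?thesis using 1 2 by (simp only: abs_le_iff) linarith
  qed
  have "\<bar>fA P (l*\<tau>) A y - (\<Sum>z\<in>A. \<rho> z)\<bar> \<le> (1/2)^l"
    by (rule near_stationary[OF st sd]) (rule osc_iter[OF st _ cB], simp)
  then show ?thesis by (simp add: fA_def)
qed



lemma final_ineq:
  fixes K \<tau> l m N :: nat and \<epsilon> \<delta> x :: real
  assumes e0: "\<epsilon> > 0" and d0: "\<delta> \<ge> 0" and dd: "\<delta>^2 = 8*K*\<tau>/N" and xd: "x = \<epsilon> + \<delta>" and x1: "x < 1"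
    and t1: "\<tau> \<ge> 1" and N1: "N \<ge> 1" and l1: "l \<ge> 1" and lx: "l * x \<le> 2"
    and Nm: "real N \<le> (m+1)*(l*\<tau>)"
  shows "2^K * (1 - x/2)^m \<le> 2 * exp (-(\<epsilon>^2 * N) / (4.5 * \<tau>))"
proof -
  have x0: "0 < x" using e0 d0 xd by simp
  have p1: "(1 - x/2)^m \<le> exp (-x/2)^m"
    by (rule power_mono) (use exp_ge_add_one_self[of "-x/2"] x1 in auto)
  have p2: "exp (-x/2)^m = exp (m * (-x/2))" by (rule exp_of_nat_mult[symmetric])
  have p3: "(2::real)^K \<le> exp 1 ^ K"
    by (rule power_mono) (use exp_ge_add_one_self[of 1] in auto)
  have p4: "exp 1 ^ K = exp (real K)" using exp_of_nat_mult[of K "1::real"] by simp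
  have lhs: "2^K * (1 - x/2)^m \<le> exp (real K + m * (-x/2))"
  proof -
    have "2^K * (1 - x/2)^m \<le> exp (real K) * exp (m * (-x/2))"
      using p1 p2 p3 p4 x1 by (intro mult_mono) auto
    also have "\<dots> = exp (real K + m * (-x/2))" by (rule exp_add[symmetric])
    finally show ?thesis .
  qed
  define q where "q = real N / real \<tau>"
  have q0: "q > 0" using t1 N1 by (simp add: q_def)
  have K: "real K = \<delta>^2 * q / 8" using dd t1 N1 by (simp add: q_def field_simps)
  have eps: "\<epsilon>^2 * N / (4.5 * \<tau>) = \<epsilon>^2 * q / 4.5" by (simp add: q_def field_simps)
  have lpos: "real l > 0" using l1 by simp
  have mL: "real m * (real l * real \<tau>) \<ge> real N - real l * real \<tau>" using Nm by (simp add: algebra_simps)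
  have "real m \<ge> q / l - 1"
  proof -
    have "q / l - 1 = (real N - real l * real \<tau>) / (real l * real \<tau>)" using t1 l1 by (simp add: q_def field_simps)
    also have "\<dots> \<le> m" using mL t1 l1 by (simp add: divide_le_eq mult.commute)
    finally show ?thesis .
  qed
  then have mx: "x/2 * m \<ge> x/2 * (q/l - 1)" using x0 by (intro mult_left_mono) auto
  have il: "1 / real l \<ge> x / 2" using lx lpos by (simp add: field_simps)
  have "x/2 * (q/l) = (x * q / 2) * (1 / l)" by simp
  also have "\<dots> \<ge> (x * q / 2) * (x/2)" using il x0 q0 by (intro mult_left_mono) auto
  finally have xq: "x/2 * (q/l) \<ge> x^2 * q / 4" by (simp add: power2_eq_square mult.commute mult.left_commute)
  have sq: "x^2 \<ge> \<epsilon>^2 + \<delta>^2" using xd e0 d0 by (simp add: power2_eq_square algebra_simps)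
  have "\<delta>^2 * q / 8 + \<epsilon>^2 * q / 4.5 \<le> (\<epsilon>^2 + \<delta>^2) * q / 4"
  proof -
    have a: "0 \<le> q * \<delta>^2" "0 \<le> q * \<epsilon>^2" using q0 by auto
    show ?thesis using a by (simp add: algebra_simps)
  qed
  also have "\<dots> \<le> x^2 * q / 4" using sq q0 by (simp add: mult_right_mono divide_right_mono)
  finally have key: "\<delta>^2 * q / 8 + \<epsilon>^2 * q / 4.5 \<le> x^2 * q / 4" .
  have ex: "real K + m * (-x/2) \<le> 1/2 + (-(\<epsilon>^2 * N) / (4.5 * \<tau>))"
  proof -
    have e1: "m * (-x/2) = -(x/2 * m)" by simp
    have e2: "-(\<epsilon>^2 * N) / (4.5 * \<tau>) = -(\<epsilon>^2 * q / 4.5)" using eps by simp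
    have e3: "x/2 * (q/l - 1) = x/2 * (q/l) - x/2" by (simp add: algebra_simps)
    show ?thesis unfolding e1 e2 using K mx e3 xq key x1 by linarith
  qed
  have h2: "exp (1/2::real) \<le> 2"
    using exp_bound_half[of "1/2::real"] by simp
  have "exp (real K + m * (-x/2)) \<le> exp (1/2 + (-(\<epsilon>^2 * N) / (4.5 * \<tau>)))" using ex by simp
  also have "\<dots> = exp (1/2) * exp (-(\<epsilon>^2 * N) / (4.5 * \<tau>))" by (rule exp_add)
  also have "\<dots> \<le> 2 * exp (-(\<epsilon>^2 * N) / (4.5 * \<tau>))" using h2 by (intro mult_right_mono) auto
  finally show ?thesis using lhs by linarith
qed



lemma suc_le_pow2: "Suc j \<le> 2^j"
  by (induction j) auto

lemma main_gen:
  fixes P :: "'s::finite \<Rightarrow> 's \<Rightarrow> real" and \<rho> mu :: "'s \<Rightarrow> real" and N :: nat and \<epsilon> :: real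
    and Gd :: "'s list \<Rightarrow> bool"
  assumes st: "stoch P" and irr: "irreducible_chain P" and ap: "aperiodic_chain P"
    and sd: "stationary_dist P \<rho>"
    and mu0: "\<forall>s. 0 \<le> mu s" and mu1: "(\<Sum>s\<in>UNIV. mu s) = 1"
    and N1: "N \<ge> 1" and e0: "\<epsilon> > 0"
    and good: "\<And>xs. (\<Sum>s\<in>-set xs. \<rho> s) \<le> \<epsilon> + sqrt (8 * real (card (UNIV :: 's set)) * real (mixing_time P \<rho>) / real N) \<Longrightarrow> Gd xs"
  shows "traj_prob mu P N Gd \<ge> 1 - 2 * exp (- (\<epsilon>^2 * real N) / (4.5 * real (mixing_time P \<rho>)))"
proof -
  define \<tau> where "\<tau> = mixing_time P \<rho>"
  define K where "K = card (UNIV :: 's set)"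
  define \<delta> where "\<delta> = sqrt (8 * real K * real \<tau> / real N)"
  define x where "x = \<epsilon> + \<delta>"
  have d0: "\<delta> \<ge> 0" unfolding \<delta>_def by simp
  have dd: "\<delta>^2 = 8*K*\<tau>/N" unfolding \<delta>_def by simp
  have good': "\<And>xs. (\<Sum>s\<in>-set xs. \<rho> s) \<le> x \<Longrightarrow> Gd xs"
    using good unfolding x_def \<delta>_def K_def \<tau>_def by blast
  have r0: "\<And>s. 0 \<le> \<rho> s" and r1: "(\<Sum>s\<in>UNIV. \<rho> s) = 1"
    using sd unfolding stationary_dist_def by blast+
  have tp0: "0 \<le> traj_prob mu P N E" for E
    unfolding traj_prob_def by (rule sum_nonneg) (use path_prob_nonneg[OF st mu0] in auto)
  show ?thesis
  proof (cases "\<tau> = 0")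
    case True
    then show ?thesis using tp0[of Gd] unfolding \<tau>_def by simp
  next
    case False
    then have t1: "\<tau> \<ge> 1" by simp
    show ?thesis
    proof (cases "x \<ge> 1")
      case True
      have "traj_prob mu P N Gd = traj_prob mu P N (\<lambda>xs. True)"
      proof -
        have "Gd xs" for xs
        proof (rule good')
          have "(\<Sum>s\<in>-set xs. \<rho> s) \<le> (\<Sum>s\<in>UNIV. \<rho> s)"
            by (rule sum_mono2) (use r0 in auto)
          then show "(\<Sum>s\<in>-set xs. \<rho> s) \<le> x" using r1 True by simp
        qed
        then show ?thesis unfolding traj_prob_def by simp
      qed
      also have "\<dots> = 1" by (rule traj_total[OF N1 st mu1])
      finally show ?thesis by simp
    next
      case False
      then have x1: "x < 1" by simp
      have x0: "x > 0" using e0 d0 by (simp add: x_def)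
      obtain n where n: "2 / x < 2^n" using real_arch_pow[of 2 "2/x"] by auto
      define l where "l = (LEAST l. 2 \<le> 2^l * x)"
      have lex: "2 \<le> 2^l * x" unfolding l_def
        by (rule LeastI[of _ n]) (use n x0 in \<open>simp add: divide_less_eq\<close>)
      have l1: "l \<ge> 1"
      proof (rule ccontr)
        assume "\<not> l \<ge> 1" then have "l = 0" by simp
        then show False using lex x1 by simp
      qed
      then obtain j where j: "l = Suc j" by (cases l) auto
      have "\<not> 2 \<le> 2^j * x" using not_less_Least[of j "\<lambda>l. 2 \<le> 2^l * x"] j unfolding l_def by simp
      then have jx: "2^j * x < 2" by simp
      have lx: "real l * x \<le> 2"
      proof -
        have "real l * x = real (Suc j) * x" using j by simp
        also have "\<dots> \<le> 2^j * x"
        proof -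
          have sj: "real (Suc j) \<le> 2^j" using suc_le_pow2[of j]
            by (metis of_nat_le_iff of_nat_numeral of_nat_power)
          show ?thesis using sj x0 by (intro mult_right_mono) auto
        qed
        finally show ?thesis using jx by simp
      qed
      have hl: "(1/2)^l \<le> x/2"
      proof -
        have "(1/2::real)^l * 2 \<le> (1/2)^l * (2^l * x)" using lex by (intro mult_left_mono) auto
        also have "\<dots> = x" by (simp add: power_one_over)
        finally show ?thesis by simp
      qed
      define L where "L = l * \<tau>"
      have L0: "L > 0" using l1 t1 by (simp add: L_def)
      define m where "m = (N - 1) div L"
      define r where "r = (N - 1) mod L"
      have Nmr: "N - 1 = m * L + r" unfolding m_def r_def by simp
      have rL: "r < L" unfolding r_def using L0 by simp
      have Nm: "real N \<le> (m+1) * (l * \<tau>)"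
      proof -
        have "N \<le> (m+1) * L" using Nmr rL N1 by (simp add: algebra_simps)
        then show ?thesis unfolding L_def by (simp flip: of_nat_mult)
      qed
      have tv: "\<forall>s'. tv_dist (matpow P \<tau> s') \<rho> \<le> 1/4"
        unfolding \<tau>_def by (rule mixing_exists[OF st irr ap sd])
      define \<A> where "\<A> = {A :: 's set. (\<Sum>s\<in>A. \<rho> s) > x}"
      have avA: "traj_prob mu P N (\<lambda>xs. set xs \<inter> A = {}) \<le> (1 - x/2)^m" if A: "A \<in> \<A>" for A
      proof -
        have hit: "x/2 \<le> (\<Sum>z\<in>A. matpow P L y z)" for y
          using hitting[OF st sd tv, of A l y] A hl unfolding \<A>_def L_def by simp
        have av: "av P A (N-1) y \<le> (1 - x/2)^m" for y
          unfolding Nmr by (rule av_block[OF st _ hit]) (use x0 in simp)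
        have "traj_prob mu P N (\<lambda>xs. set xs \<inter> A = {}) = (\<Sum>y\<in>UNIV. mu y * av P A (N-1) y)"
          by (rule traj_avoid[OF N1])
        also have "\<dots> \<le> (\<Sum>y\<in>UNIV. mu y * (1 - x/2)^m)"
          by (rule sum_mono) (use av mu0 in \<open>auto intro: mult_left_mono\<close>)
        also have "\<dots> = (1 - x/2)^m" using mu1 by (simp add: sum_distrib_right[symmetric])
        finally show ?thesis .
      qed
      have cov: "\<exists>A\<in>\<A>. set xs \<inter> A = {}" if "\<not> Gd xs" for xs
      proof -
        have "(\<Sum>s\<in>-set xs. \<rho> s) > x" using good' that by force
        then show ?thesis unfolding \<A>_def by (intro bexI[of _ "-set xs"]) auto
      qed
      have "traj_prob mu P N (\<lambda>xs. \<not> Gd xs) \<le> (\<Sum>A\<in>\<A>. traj_prob mu P N (\<lambda>xs. set xs \<inter> A = {}))"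
        by (rule traj_union[OF st mu0]) (use cov in auto)
      also have "\<dots> \<le> (\<Sum>A\<in>\<A>. (1 - x/2)^m)" by (rule sum_mono) (rule avA)
      also have "\<dots> = real (card \<A>) * (1 - x/2)^m" by simp
      also have "\<dots> \<le> 2^K * (1 - x/2)^m"
      proof -
        have "card \<A> \<le> card (UNIV :: 's set set)" by (rule card_mono) auto
        also have "\<dots> = 2^K" unfolding K_def using card_Pow[of "UNIV :: 's set"] by simp
        finally have "real (card \<A>) \<le> 2^K" by (simp flip: of_nat_le_iff)
        then show ?thesis using x1 by (intro mult_right_mono) auto
      qed
      also have "\<dots> \<le> 2 * exp (-(\<epsilon>^2 * N) / (4.5 * \<tau>))"
        by (rule final_ineq[OF e0 d0 dd x_def x1 t1 N1 l1 lx Nm])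
      finally have fail: "traj_prob mu P N (\<lambda>xs. \<not> Gd xs) \<le> 2 * exp (-(\<epsilon>^2 * N) / (4.5 * \<tau>))" .
      have "traj_prob mu P N Gd = 1 - traj_prob mu P N (\<lambda>xs. \<not> Gd xs)"
        using traj_compl[of mu P N Gd] traj_total[OF N1 st mu1] by simp
      then show ?thesis using fail unfolding \<tau>_def by simp
    qed
  qed
qed



lemma det_chain: "induced_chain T (det_policy d) s s' = T s (d s) s'"
proof -
  have "induced_chain T (det_policy d) s s' = (\<Sum>a\<in>UNIV. if a = d s then T s a s' else 0)"
    unfolding induced_chain_def det_policy_def by (rule sum.cong) auto
  then show ?thesis by simp
qed

lemma stoch_det: "mdp_kernel T \<Longrightarrow> stoch (induced_chain T (det_policy d))"
  unfolding stoch_def det_chain mdp_kernel_def by blast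

lemma expE:
  fixes \<rho> :: "'s::finite \<Rightarrow> real" and d :: "'s \<Rightarrow> 'a::finite"
  shows "expect_sa (sa_dist \<rho> (det_policy d)) (R_int (dataset d xs)) = (\<Sum>s\<in>set xs. \<rho> s)"
proof -
  have in_ds: "((s, d s) \<in> dataset d xs) = (s \<in> set xs)" for s unfolding dataset_def by auto
  have "expect_sa (sa_dist \<rho> (det_policy d)) (R_int (dataset d xs))
      = (\<Sum>p\<in>UNIV \<times> UNIV. sa_dist \<rho> (det_policy d) p * R_int (dataset d xs) p)"
    unfolding expect_sa_def UNIV_Times_UNIV ..
  also have "\<dots> = (\<Sum>s\<in>UNIV. \<Sum>a\<in>UNIV. sa_dist \<rho> (det_policy d) (s,a) * R_int (dataset d xs) (s,a))"
    unfolding sum.cartesian_product by simp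
  also have "\<dots> = (\<Sum>s\<in>UNIV. if s \<in> set xs then \<rho> s else 0)"
  proof (rule sum.cong[OF refl])
    fix s
    have "(\<Sum>a\<in>UNIV. sa_dist \<rho> (det_policy d) (s,a) * R_int (dataset d xs) (s,a))
        = (\<Sum>a\<in>UNIV. if a = d s then \<rho> s * R_int (dataset d xs) (s, d s) else 0)"
      by (rule sum.cong) (auto simp: sa_dist_def det_policy_def)
    also have "\<dots> = (if s \<in> set xs then \<rho> s else 0)" by (simp add: R_int_def in_ds)
    finally show "(\<Sum>a\<in>UNIV. sa_dist \<rho> (det_policy d) (s,a) * R_int (dataset d xs) (s,a)) = (if s \<in> set xs then \<rho> s else 0)" .
  qed
  also have "\<dots> = (\<Sum>s\<in>set xs. \<rho> s)"
    using sum.inter_restrict[of UNIV \<rho> "set xs"] by simp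
  finally show ?thesis .
qed

lemma split_compl:
  fixes \<rho> :: "'s::finite \<Rightarrow> real"
  shows "(\<Sum>s\<in>B. \<rho> s) = (\<Sum>s\<in>UNIV. \<rho> s) - (\<Sum>s\<in>-B. \<rho> s)"
proof -
  have "(\<Sum>s\<in>UNIV. \<rho> s) = (\<Sum>s\<in>UNIV - B. \<rho> s) + (\<Sum>s\<in>B. \<rho> s)"
    by (rule sum.subset_diff) auto
  then show ?thesis by (simp add: Compl_eq_Diff_UNIV)
qed

theorem lemma5:
  fixes T :: "'s::finite \<Rightarrow> 'a::finite \<Rightarrow> 's \<Rightarrow> real"
    and piE :: "'s \<Rightarrow> 'a"
    and \<rho>ES :: "'s \<Rightarrow> real"
    and mu :: "'s \<Rightarrow> real"
    and N :: nat and \<epsilon> :: real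
  assumes "mdp_kernel T"
    and "irreducible_chain (induced_chain T (det_policy piE))"
    and "aperiodic_chain (induced_chain T (det_policy piE))"
    and "stationary_dist (induced_chain T (det_policy piE)) \<rho>ES"
    and "\<forall>s. 0 \<le> mu s" and "(\<Sum>s\<in>UNIV. mu s) = 1"
    and "N \<ge> 1"
    and "\<epsilon> > 0"
  shows "traj_prob mu (induced_chain T (det_policy piE)) N
     (\<lambda>xs. let D = dataset piE xs;
              \<tau> = mixing_time (induced_chain T (det_policy piE)) \<rho>ES;
              bnd = 1 - \<epsilon> - sqrt (8 * real (card (UNIV :: 's set)) * real \<tau> / real N)
          in expect_sa (sa_dist \<rho>ES (det_policy piE)) (R_int D) \<ge> bnd \<and>
             (\<forall>piI \<rho>IS. is_policy piI
                 \<longrightarrow> irreducible_chain (induced_chain T piI)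
                 \<longrightarrow> aperiodic_chain (induced_chain T piI)
                 \<longrightarrow> stationary_dist (induced_chain T piI) \<rho>IS
                 \<longrightarrow> expect_sa (sa_dist \<rho>IS piI) (R_int D)
                       \<ge> expect_sa (sa_dist \<rho>ES (det_policy piE)) (R_int D)
                 \<longrightarrow> expect_sa (sa_dist \<rho>IS piI) (R_int D) \<ge> bnd))
   \<ge> 1 - 2 * exp (- (\<epsilon>^2 * real N) / (4.5 * real (mixing_time (induced_chain T (det_policy piE)) \<rho>ES)))"
proof -
  have st: "stoch (induced_chain T (det_policy piE))" by (rule stoch_det[OF assms(1)])
  have r1: "(\<Sum>s\<in>UNIV. \<rho>ES s) = 1" using assms(4) unfolding stationary_dist_def by blast
  have ex: "expect_sa (sa_dist \<rho>ES (det_policy piE)) (R_int (dataset piE xs)) = 1 - (\<Sum>s\<in>-set xs. \<rho>ES s)" for xs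
    unfolding expE split_compl[of _ "set xs"] r1 ..
  show ?thesis unfolding Let_def
    apply (rule main_gen[OF st assms(2-8)])
    subgoal for xs using ex[of xs] by (auto intro: order.trans)
    done
qed


end
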